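(* Let $n \ge 4$, let $\lambda = (\lambda_1,\lambda_2)$ with integers $\lambda_1 \ge \lambda_2 \ge 0$, and let $(\lambda, i, j, k)$ be an admissible tuple. Then the function $\psi_{\lambda,(i,j,k)} \colon \mathcal{I}_2 \to V$ is $\mathrm{O}(n)$-equivariant, i.e. $\psi_{\lambda,(i,j,k)}(gJ) = \pi(g)\psi_{\lambda,(i,j,k)}(J)$ for all $g \in \mathrm{O}(n)$ and $J \in \mathcal{I}_2$.
   Context: Setting. Fix an angle $\theta$ and consider the graph on $S^{n-1}$ in which distinct $x,y$ are adjacent if $\langle x,y\rangle > \cos\theta$; $\mathcal{I}_2$ is the set of independent sets of this graph of cardinality at most $2$ (including $\emptyset$), and $\mathcal{I}_{=i}$ those of cardinality exactly $i$. $\mathrm{O}(n)$ (real orthogonal $n\times n$ matrices) acts by $g\{x_1,\dots\} = \{gx_1,\dots\}$. $\mathrm{O}(n,\mathbb{C})$ denotes complex $n\times n$ matrices $g$ with $g^{\sf T} g = I$. Representation of $\mathrm{GL}(2)$: let $U = \mathbb{C}^2$ with basis $e_1,e_2$ and tautological action, $m = \lambda_1 - \lambda_2$, $W = \mathrm{Sym}^{\lambda_2}(\wedge^2 U)\otimes \mathrm{Sym}^m(U)$ with the induced action $\rho \colon \mathrm{GL}(2)\to \mathrm{GL}(W)$ (extended polynomially to all $2\times 2$ complex matrices), basis $w_k = (e_1\wedge e_2)^{\lambda_2} e_1^{m-k} e_2^k$, $k = 0,\dots,m$, and inner product making this basis orthonormal. Put $c_1(k) = \lambda_2 + m - k$,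 $c_2(k) = \lambda_2 + k$. Induced representation of $\mathrm{O}(n)$: let $\omega = (I_2 \ \ iI_2 \ \ 0)$ (a $2\times n$ complex matrix) and $\epsilon = \binom{I_2}{0}$ (an $n \times 2$ matrix). For $w \in W$ define $f_w \colon \mathrm{O}(n,\mathbb{C}) \to W$, $f_w(\gamma) = \rho(\omega\gamma\epsilon)w$, and let $V = \mathrm{span}\{R_g f_w : g \in \mathrm{O}(n,\mathbb{C}), w\in W\}$ where $(R_g f)(\gamma) = f(\gamma g)$; $\pi$ is the representation of $\mathrm{O}(n)$ on $V$ by right translation, with inner product $\langle f_1,f_2\rangle = \int_{\mathrm{O}(n)} \langle f_1(\gamma), f_2(\gamma)\rangle\, d\gamma$ (normalized Haar measure). Let $\Psi(w) = f_w$. Orbit representatives and section: for $J\in\mathcal{I}_2$ with $|J|\ge 1$ write $J = \{x,y\}$ (with $x=y$ if $|J|=1$) and put $p_j(J) = \langle x,y\rangle^j$, $q_1(J) = \sqrt{2+2\langle x,y\rangle}$, $q_2(J) = \sqrt{2 - 2\langle x,y\rangle}$; the representative of the orbit $\mathrm{O}(n)J$ is $R_J = \{(q_1(J)/2, q_2(J)/2, 0,\dots,0), (q_1(J)/2, -q_2(J)/2,0,\dots,0)\}$ (so $e_1$ for singletons), and of $\mathcal{I}_{=0}$ is $\emptyset$. A section is a map $s \colon \mathcal{I}_2 \to \mathrm{O}(n)$ with $s(J)R_J = J$. Admissible tuples $(\lambda,i,j,k)$: for $i=0$: $\lambda = (0,0)$, $j=k=0$; for $i=1$: $\lambda_2 =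 0$, $j = k = 0$; for $i = 2$: any $\lambda$, $j\ge 0$, $0\le k\le \lambda_1-\lambda_2$ with $\lambda_2 + k$ even. Equivariant functions: $\psi_{\lambda,(i,j,k)}(J) = \xi_{\lambda,i,j,k}(J)\,\pi(s(J))\Psi(w_k)$, where $\xi_{\lambda,i,j,k}(J) = 1$ if $i = |J| < 2$, $\xi_{\lambda,i,j,k}(J) = p_j(J) q_1(J)^{c_1(k)} q_2(J)^{c_2(k)}$ if $i = |J| = 2$, and $0$ otherwise (with $0^0 = 1$). *)

theory Defs
  imports "Jordan_Normal_Form.Determinant" "HOL-Computational_Algebra.Polynomial"
begin

definition sphere_n :: "nat \<Rightarrow> real vec set" where
  "sphere_n n = {x. dim_vec x = n \<and> x \<bullet> x = 1}"

(* independent sets of cardinality at most 2 of the graph with edges <x,y> > cos theta *)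
definition I2 :: "nat \<Rightarrow> real \<Rightarrow> real vec set set" where
  "I2 n \<theta> = {J. J \<subseteq> sphere_n n \<and> finite J \<and> card J \<le> 2 \<and>
       (\<forall>x\<in>J. \<forall>y\<in>J. x \<noteq> y \<longrightarrow> \<not> (x \<bullet> y > cos \<theta>))}"

definition orth :: "nat \<Rightarrow> real mat set" where
  "orth n = {g \<in> carrier_mat n n. transpose_mat g * g = 1\<^sub>m n}"

definition orthC :: "nat \<Rightarrow> complex mat set" where
  "orthC n = {g \<in> carrier_mat n n. transpose_mat g * g = 1\<^sub>m n}"

definition act :: "real mat \<Rightarrow> real vec set \<Rightarrow> real vec set" where
  "act g J = (\<lambda>x. g *\<^sub>v x) ` J"

(* <x,y> for J = {x,y} (x = y if |J| = 1) *)
definition ipJ :: "real vec set \<Rightarrow> real" where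
  "ipJ J = (SOME t. \<exists>x\<in>J. \<exists>y\<in>J. (card J \<ge> 2 \<longrightarrow> x \<noteq> y) \<and> t = x \<bullet> y)"

definition pJ :: "nat \<Rightarrow> real vec set \<Rightarrow> real" where
  "pJ j J = ipJ J ^ j"

definition q1 :: "real vec set \<Rightarrow> real" where
  "q1 J = sqrt (2 + 2 * ipJ J)"

definition q2 :: "real vec set \<Rightarrow> real" where
  "q2 J = sqrt (2 - 2 * ipJ J)"

definition repr :: "nat \<Rightarrow> real vec set \<Rightarrow> real vec set" where
  "repr n J = (if J = {} then {} else
     {vec n (\<lambda>i. if i = 0 then q1 J / 2 else if i = 1 then q2 J / 2 else 0),
      vec n (\<lambda>i. if i = 0 then q1 J / 2 else if i = 1 then - q2 J / 2 else 0)})"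

definition is_section :: "nat \<Rightarrow> real \<Rightarrow> (real vec set \<Rightarrow> real mat) \<Rightarrow> bool" where
  "is_section n \<theta> s \<longleftrightarrow> (\<forall>J\<in>I2 n \<theta>. s J \<in> orth n \<and> act (s J) (repr n J) = J)"

(* W = Sym^{l2}(wedge^2 U) (x) Sym^m(U), m = l1 - l2, identified with C^{m+1} via the
   basis w_k = (e1/\e2)^{l2} e1^{m-k} e2^k.  Sym^m(U) is identified with polynomials in t
   of degree <= m via e1^{m-k} e2^k |-> t^k.  rho(M) w_k = det(M)^{l2} (M e1)^{m-k} (M e2)^k. *)
definition rho :: "nat \<Rightarrow> nat \<Rightarrow> complex mat \<Rightarrow> complex vec \<Rightarrow> complex vec" where
  "rho l1 l2 M w = vec (l1 - l2 + 1) (\<lambda>l. det M ^ l2 *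
     (\<Sum>k\<le>l1 - l2. w $ k *
        coeff ([:M $$ (0,0), M $$ (1,0):] ^ (l1 - l2 - k) * [:M $$ (0,1), M $$ (1,1):] ^ k) l))"

definition wbasis :: "nat \<Rightarrow> nat \<Rightarrow> nat \<Rightarrow> complex vec" where
  "wbasis l1 l2 k = unit_vec (l1 - l2 + 1) k"

definition omega :: "nat \<Rightarrow> complex mat" where
  "omega n = mat 2 n (\<lambda>(i,j). if j = i then 1 else if j = i + 2 then \<i> else 0)"

definition epsilon :: "nat \<Rightarrow> complex mat" where
  "epsilon n = mat n 2 (\<lambda>(i,j). if i = j then 1 else 0)"

definition Psi :: "nat \<Rightarrow> nat \<Rightarrow> nat \<Rightarrow> complex vec \<Rightarrow> complex mat \<Rightarrow> complex vec" where
  "Psi n l1 l2 w = (\<lambda>\<gamma>. rho l1 l2 (omega n * \<gamma> * epsilon n) w)"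

definition piR :: "real mat \<Rightarrow> (complex mat \<Rightarrow> complex vec) \<Rightarrow> (complex mat \<Rightarrow> complex vec)" where
  "piR g f = (\<lambda>\<gamma>. f (\<gamma> * map_mat complex_of_real g))"

definition xi :: "nat \<Rightarrow> nat \<Rightarrow> nat \<Rightarrow> nat \<Rightarrow> nat \<Rightarrow> real vec set \<Rightarrow> real" where
  "xi l1 l2 i j k J =
     (if i = card J \<and> card J < 2 then 1
      else if i = card J \<and> card J = 2 then
        pJ j J * q1 J ^ (l2 + (l1 - l2) - k) * q2 J ^ (l2 + k)
      else 0)"

definition admissible :: "nat \<times> nat \<Rightarrow> nat \<Rightarrow> nat \<Rightarrow> nat \<Rightarrow> bool" where
  "admissible lam i j k \<longleftrightarrow>
     (i = 0 \<and> lam = (0,0) \<and> j = 0 \<and> k = 0) \<or>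
     (i = 1 \<and> snd lam = 0 \<and> j = 0 \<and> k = 0) \<or>
     (i = 2 \<and> k \<le> fst lam - snd lam \<and> even (snd lam + k))"

definition psi :: "nat \<Rightarrow> (real vec set \<Rightarrow> real mat) \<Rightarrow> nat \<times> nat \<Rightarrow> nat \<Rightarrow> nat \<Rightarrow> nat
                   \<Rightarrow> real vec set \<Rightarrow> complex mat \<Rightarrow> complex vec" where
  "psi n s lam i j k J = (\<lambda>\<gamma>. complex_of_real (xi (fst lam) (snd lam) i j k J) \<cdot>\<^sub>v
      piR (s J) (Psi n (fst lam) (snd lam) (wbasis (fst lam) (snd lam) k)) \<gamma>)"

end

theory Submission
  imports Defs
begin


lemma rho_unit:
  assumes "k \<le> l1 - l2"
  shows "rho l1 l2 M (wbasis l1 l2 k) = vec (l1 - l2 + 1) (\<lambda>l. det M ^ l2 *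
     coeff ([:M $$ (0,0), M $$ (1,0):] ^ (l1 - l2 - k) * [:M $$ (0,1), M $$ (1,1):] ^ k) l)"
proof -
  have "(\<Sum>k'\<le>l1 - l2. unit_vec (l1 - l2 + 1) k $ k' *
        coeff ([:M $$ (0,0), M $$ (1,0):] ^ (l1 - l2 - k') * [:M $$ (0,1), M $$ (1,1):] ^ k') l)
     = coeff ([:M $$ (0,0), M $$ (1,0):] ^ (l1 - l2 - k) * [:M $$ (0,1), M $$ (1,1):] ^ k) l" for l
  proof -
    have "(\<Sum>k'\<le>l1 - l2. unit_vec (l1 - l2 + 1) k $ k' *
        coeff ([:M $$ (0,0), M $$ (1,0):] ^ (l1 - l2 - k') * [:M $$ (0,1), M $$ (1,1):] ^ k') l)
      = (\<Sum>k'\<le>l1 - l2. if k' = k then 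
        coeff ([:M $$ (0,0), M $$ (1,0):] ^ (l1 - l2 - k') * [:M $$ (0,1), M $$ (1,1):] ^ k') l else 0)"
      proof (rule sum.cong)
        fix x assume "x \<in> {..l1 - l2}"
        then have "x < l1 - l2 + 1" by simp
        then show "unit_vec (l1 - l2 + 1) k $ x *
        coeff ([:M $$ (0,0), M $$ (1,0):] ^ (l1 - l2 - x) * [:M $$ (0,1), M $$ (1,1):] ^ x) l =
         (if x = k then coeff ([:M $$ (0,0), M $$ (1,0):] ^ (l1 - l2 - x) * [:M $$ (0,1), M $$ (1,1):] ^ x) l else 0)"
          using assms by (simp add: index_unit_vec)
      qed simp
    also have "\<dots> = coeff ([:M $$ (0,0), M $$ (1,0):] ^ (l1 - l2 - k) * [:M $$ (0,1), M $$ (1,1):] ^ k) l"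
      using assms by (simp add: sum.delta)
    finally show ?thesis .
  qed
  thus ?thesis unfolding rho_def wbasis_def by (intro eq_vecI) auto
qed

lemma det_scale_col1:
  fixes M M' :: "complex mat"
  assumes M: "M \<in> carrier_mat 2 2" and M': "M' \<in> carrier_mat 2 2"
    and c0: "\<And>r. r < 2 \<Longrightarrow> M' $$ (r,0) = M $$ (r,0)"
    and c1: "\<And>r. r < 2 \<Longrightarrow> M' $$ (r,1) = \<sigma> * M $$ (r,1)"
  shows "det M' = \<sigma> * det M"
proof -
  have "M' = transpose_mat (multrow 1 \<sigma> (transpose_mat M))"
  proof (rule eq_matI)
    fix r c assume "r < dim_row (transpose_mat (multrow 1 \<sigma> (transpose_mat M)))"
      "c < dim_col (transpose_mat (multrow 1 \<sigma> (transpose_mat M)))"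
    then have "r < 2" "c < 2" using M by auto
    then show "M' $$ (r, c) = transpose_mat (multrow 1 \<sigma> (transpose_mat M)) $$ (r, c)"
      using M c0 c1 by (cases "c = 0") (auto simp: less_2_cases_iff)
  qed (use M M' in auto)
  then show ?thesis using M det_transpose det_multrow
    by (metis carrier_matD(1,2) carrier_matI index_mat_multrow(4,5) index_transpose_mat(2,3) one_less_numeral_iff semiring_norm(76))
qed

lemma rho_A:
  fixes M M' :: "complex mat"
  assumes M: "M \<in> carrier_mat 2 2" and M': "M' \<in> carrier_mat 2 2"
    and c0: "\<And>r. r < 2 \<Longrightarrow> M' $$ (r,0) = M $$ (r,0)"
    and c1: "\<And>r. r < 2 \<Longrightarrow> M' $$ (r,1) = \<sigma> * M $$ (r,1)"
    and sig: "\<sigma> * \<sigma> = 1" and ev: "even (l2 + k)" and k: "k \<le> l1 - l2"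
  shows "rho l1 l2 M' (wbasis l1 l2 k) = rho l1 l2 M (wbasis l1 l2 k)"
proof -
  have d: "det M' = \<sigma> * det M" by (rule det_scale_col1[OF M M' c0 c1])
  have p: "[:M' $$ (0,1), M' $$ (1,1):] = smult \<sigma> [:M $$ (0,1), M $$ (1,1):]"
    using c1[of 0] c1[of 1] by simp
  have c00: "M' $$ (0,0) = M $$ (0,0)" and c10: "M' $$ (1,0) = M $$ (1,0)" using c0 by auto
  have s: "\<sigma> ^ (l2 + k) = 1"
  proof -
    obtain t where "l2 + k = 2 * t" using ev by blast
    then show ?thesis using sig by (simp add: power_mult power2_eq_square)
  qed
  have "det M' ^ l2 * coeff ([:M' $$ (0,0), M' $$ (1,0):] ^ (l1 - l2 - k) * [:M' $$ (0,1), M' $$ (1,1):] ^ k) l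
     = det M ^ l2 * coeff ([:M $$ (0,0), M $$ (1,0):] ^ (l1 - l2 - k) * [:M $$ (0,1), M $$ (1,1):] ^ k) l" for l
  proof -
    have "det M' ^ l2 * coeff ([:M' $$ (0,0), M' $$ (1,0):] ^ (l1 - l2 - k) * [:M' $$ (0,1), M' $$ (1,1):] ^ k) l
      = (\<sigma> ^ (l2 + k)) * (det M ^ l2 * coeff ([:M $$ (0,0), M $$ (1,0):] ^ (l1 - l2 - k) * [:M $$ (0,1), M $$ (1,1):] ^ k) l)"
      unfolding d p c00 c10 smult_power mult_smult_right coeff_smult power_add power_mult_distrib
      by (simp add: mult_ac)
    then show ?thesis using s by simp
  qed
  then show ?thesis unfolding rho_unit[OF k] by (intro eq_vecI) auto
qed

lemma rho_B:
  fixes M M' :: "complex mat"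
  assumes c0: "\<And>r. r < 2 \<Longrightarrow> M' $$ (r,0) = M $$ (r,0)"
  shows "rho l1 0 M' (wbasis l1 0 0) = rho l1 0 M (wbasis l1 0 0)"
proof -
  have c00: "M' $$ (0,0) = M $$ (0,0)" and c10: "M' $$ (1,0) = M $$ (1,0)" using c0 by auto
  have c10': "M' $$ (Suc 0,0) = M $$ (Suc 0,0)" using c10 by simp
  show ?thesis by (simp add: rho_unit c00 c10')
qed

lemma rho_C:
  fixes M M' :: "complex mat"
  assumes c1: "\<And>r. r < 2 \<Longrightarrow> M' $$ (r,1) = \<sigma> * M $$ (r,1)"
    and sig: "\<sigma> * \<sigma> = 1" and ev: "even l1"
  shows "rho l1 0 M' (wbasis l1 0 l1) = rho l1 0 M (wbasis l1 0 l1)"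
proof -
  have p: "[:M' $$ (0,1), M' $$ (1,1):] = smult \<sigma> [:M $$ (0,1), M $$ (1,1):]"
    using c1[of 0] c1[of 1] by simp
  have s: "\<sigma> ^ l1 = 1"
  proof -
    obtain t where "l1 = 2 * t" using ev by blast
    then show ?thesis using sig by (simp add: power_mult power2_eq_square)
  qed
  have p': "[:M' $$ (0,Suc 0), M' $$ (Suc 0,Suc 0):] = smult \<sigma> [:M $$ (0,Suc 0), M $$ (Suc 0,Suc 0):]"
    using p by simp
  have q: "[:M' $$ (0,Suc 0), M' $$ (Suc 0,Suc 0):]^l1 = [:M $$ (0,Suc 0), M $$ (Suc 0,Suc 0):]^l1"
    by (simp only: p' smult_power s smult_1_left)
  show ?thesis by (simp add: rho_unit q)
qed

lemma rho_0:
  shows "rho 0 0 M' w = rho 0 0 M w"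
  unfolding rho_def by simp

lemma mv_entry:
  fixes A :: "real mat"
  assumes A: "A \<in> carrier_mat n n" and n: "n \<ge> 2" and u: "u < n"
  shows "(A *\<^sub>v vec n (\<lambda>i. if i = 0 then x else if i = 1 then y else 0)) $ u
     = x * A $$ (u,0) + y * A $$ (u,1)"
proof -
  have e: "{0..<n} = insert 0 (insert 1 {2..<n})" using n by auto
  have "(A *\<^sub>v vec n (\<lambda>i. if i = 0 then x else if i = 1 then y else 0)) $ u
     = (\<Sum>i\<in>{0..<n}. A $$ (u,i) * (if i = 0 then x else if i = 1 then y else 0))"
    using A u by (auto simp: scalar_prod_def intro!: sum.cong)
  also have "\<dots> = x * A $$ (u,0) + y * A $$ (u,1)"
    unfolding e by (simp add: sum.insert)
  finally show ?thesis .
qed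

lemma orth_inj:
  assumes A: "A \<in> orth n" and x: "x \<in> carrier_vec n" and y: "y \<in> carrier_vec n"
    and e: "A *\<^sub>v x = A *\<^sub>v y"
  shows "x = y"
proof -
  have Ac: "A \<in> carrier_mat n n" and AA: "transpose_mat A * A = 1\<^sub>m n" using A by (auto simp: orth_def)
  have "x = (transpose_mat A * A) *\<^sub>v x" using AA x by simp
  also have "\<dots> = transpose_mat A *\<^sub>v (A *\<^sub>v x)" using Ac x by (simp add: assoc_mult_mat_vec)
  also have "\<dots> = transpose_mat A *\<^sub>v (A *\<^sub>v y)" using e by simp
  also have "\<dots> = (transpose_mat A * A) *\<^sub>v y" using Ac y by (simp add: assoc_mult_mat_vec)
  also have "\<dots> = y" using AA y by simp
  finally show ?thesis .
qed

lemma orth_ip: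
  assumes A: "A \<in> orth n" and x: "x \<in> carrier_vec n" and y: "y \<in> carrier_vec n"
  shows "(A *\<^sub>v x) \<bullet> (A *\<^sub>v y) = x \<bullet> y"
proof -
  have Ac: "A \<in> carrier_mat n n" and AA: "transpose_mat A * A = 1\<^sub>m n" using A by (auto simp: orth_def)
  have "(transpose_mat A *\<^sub>v (A *\<^sub>v y)) \<bullet> x = (A *\<^sub>v y) \<bullet> (A *\<^sub>v x)"
    by (rule transpose_vec_mult_scalar[OF Ac x]) (use Ac y in auto)
  moreover have "transpose_mat A *\<^sub>v (A *\<^sub>v y) = y"
  proof -
    have "transpose_mat A *\<^sub>v (A *\<^sub>v y) = (transpose_mat A * A) *\<^sub>v y"
      using Ac y by (simp add: assoc_mult_mat_vec)
    then show ?thesis using AA y by simp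
  qed
  moreover have "(A *\<^sub>v y) \<bullet> (A *\<^sub>v x) = (A *\<^sub>v x) \<bullet> (A *\<^sub>v y)"
    by (rule comm_scalar_prod[of _ n]) (use Ac x y in auto)
  moreover have "y \<bullet> x = x \<bullet> y" by (rule comm_scalar_prod[of _ n]) (use x y in auto)
  ultimately show ?thesis by simp
qed

lemma cols_rel:
  fixes A B :: "real mat" and n :: nat and c1 c2 :: real
  defines "a \<equiv> vec n (\<lambda>i. if i = 0 then c1 else if i = 1 then c2 else 0)"
    and "b \<equiv> vec n (\<lambda>i. if i = 0 then c1 else if i = 1 then - c2 else 0)"
  assumes A: "A \<in> orth n" and B: "B \<in> orth n" and n: "n \<ge> 2"
    and e: "act A {a, b} = act B {a, b}"
  shows "(c1 \<noteq> 0 \<longrightarrow> (\<forall>u<n. A $$ (u,0) = B $$ (u,0))) \<and>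
         (c2 \<noteq> 0 \<longrightarrow> (\<forall>u<n. A $$ (u,1) = B $$ (u,1)) \<or> (\<forall>u<n. A $$ (u,1) = - B $$ (u,1)))"
proof -
  have Ac: "A \<in> carrier_mat n n" and Bc: "B \<in> carrier_mat n n" using A B by (auto simp: orth_def)
  have ac: "a \<in> carrier_vec n" and bc: "b \<in> carrier_vec n" unfolding a_def b_def by auto
  have Aa: "\<And>u. u < n \<Longrightarrow> (A *\<^sub>v a) $ u = c1 * A $$ (u,0) + c2 * A $$ (u,1)"
    unfolding a_def by (rule mv_entry[OF Ac n])
  have Ab: "\<And>u. u < n \<Longrightarrow> (A *\<^sub>v b) $ u = c1 * A $$ (u,0) - c2 * A $$ (u,1)"
    unfolding b_def using mv_entry[OF Ac n] by simp
  have Ba: "\<And>u. u < n \<Longrightarrow> (B *\<^sub>v a) $ u = c1 * B $$ (u,0) + c2 * B $$ (u,1)"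
    unfolding a_def by (rule mv_entry[OF Bc n])
  have Bb: "\<And>u. u < n \<Longrightarrow> (B *\<^sub>v b) $ u = c1 * B $$ (u,0) - c2 * B $$ (u,1)"
    unfolding b_def using mv_entry[OF Bc n] by simp
  have e2: "{A *\<^sub>v a, A *\<^sub>v b} = {B *\<^sub>v a, B *\<^sub>v b}" using e by (simp add: act_def)
  show ?thesis
  proof (cases "c2 = 0")
    case True
    then have "a = b" unfolding a_def b_def by auto
    then have "A *\<^sub>v a = B *\<^sub>v a" using e2 by auto
    then have "c1 * A $$ (u,0) = c1 * B $$ (u,0)" if "u < n" for u
    proof -
      have "(A *\<^sub>v a) $ u = (B *\<^sub>v a) $ u" using \<open>A *\<^sub>v a = B *\<^sub>v a\<close> by simp
      then show ?thesis using Aa[OF that] Ba[OF that] True by simp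
    qed
    then show ?thesis using True by auto
  next
    case False
    have "a \<noteq> b"
    proof
      assume "a = b"
      then have "a $ 1 = b $ 1" by simp
      then show False using False n unfolding a_def b_def by auto
    qed
    then have "A *\<^sub>v a \<noteq> A *\<^sub>v b" using orth_inj[OF A ac bc] by auto
    then have cs: "(A *\<^sub>v a = B *\<^sub>v a \<and> A *\<^sub>v b = B *\<^sub>v b) \<or> (A *\<^sub>v a = B *\<^sub>v b \<and> A *\<^sub>v b = B *\<^sub>v a)"
      using e2 by (auto simp: doubleton_eq_iff)
    then show ?thesis
    proof
      assume h: "A *\<^sub>v a = B *\<^sub>v a \<and> A *\<^sub>v b = B *\<^sub>v b"
      have "c1 * A $$ (u,0) = c1 * B $$ (u,0) \<and> c2 * A $$ (u,1) = c2 * B $$ (u,1)" if "u < n" for u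
      proof -
        have "(A *\<^sub>v a) $ u = (B *\<^sub>v a) $ u" "(A *\<^sub>v b) $ u = (B *\<^sub>v b) $ u" using h by simp_all
        then have "c1 * A $$ (u,0) + c2 * A $$ (u,1) = c1 * B $$ (u,0) + c2 * B $$ (u,1)"
             "c1 * A $$ (u,0) - c2 * A $$ (u,1) = c1 * B $$ (u,0) - c2 * B $$ (u,1)"
          using Aa[OF that] Ba[OF that] Ab[OF that] Bb[OF that] by simp_all
        then show ?thesis by linarith
      qed
      then show ?thesis using False by auto
    next
      assume h: "A *\<^sub>v a = B *\<^sub>v b \<and> A *\<^sub>v b = B *\<^sub>v a"
      have "c1 * A $$ (u,0) = c1 * B $$ (u,0) \<and> A $$ (u,1) = - B $$ (u,1)" if "u < n" for u
      proof -
        have "c1 * A $$ (u,0) + c2 * A $$ (u,1) = c1 * B $$ (u,0) - c2 * B $$ (u,1)"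
             "c1 * A $$ (u,0) - c2 * A $$ (u,1) = c1 * B $$ (u,0) + c2 * B $$ (u,1)"
        proof -
          have "(A *\<^sub>v a) $ u = (B *\<^sub>v b) $ u" "(A *\<^sub>v b) $ u = (B *\<^sub>v a) $ u" using h by simp_all
          then show "c1 * A $$ (u,0) + c2 * A $$ (u,1) = c1 * B $$ (u,0) - c2 * B $$ (u,1)"
             "c1 * A $$ (u,0) - c2 * A $$ (u,1) = c1 * B $$ (u,0) + c2 * B $$ (u,1)"
            using Aa[OF that] Ba[OF that] Ab[OF that] Bb[OF that] by simp_all
        qed
        then have "c1 * A $$ (u,0) = c1 * B $$ (u,0)" "c2 * A $$ (u,1) = c2 * (- B $$ (u,1))"
          by (simp only: mult_minus_right, linarith)+
        then show ?thesis using False by (metis mult_left_cancel)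
      qed
      then show ?thesis using False by auto
    qed
  qed
qed



lemma map_mat_mult_real:
  fixes g S :: "real mat"
  assumes g: "g \<in> carrier_mat n n" and S: "S \<in> carrier_mat n n"
  shows "map_mat complex_of_real (g * S) = map_mat complex_of_real g * map_mat complex_of_real S"
proof (rule eq_matI)
  fix i j assume ij: "i < dim_row (map_mat complex_of_real g * map_mat complex_of_real S)"
    "j < dim_col (map_mat complex_of_real g * map_mat complex_of_real S)"
  then have "i < n" "j < n" using g S by auto
  then show "map_mat complex_of_real (g * S) $$ (i, j) =
    (map_mat complex_of_real g * map_mat complex_of_real S) $$ (i, j)"
    using g S by (simp add: scalar_prod_def of_real_sum)
qed (use g S in auto)

lemma M_entry:
  fixes \<gamma> :: "complex mat" and Y :: "real mat"
  assumes \<gamma>: "\<gamma> \<in> carrier_mat n n" and Y: "Y \<in> carrier_mat n n" and n: "n \<ge> 4"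
    and r: "r < 2" and c: "c < 2"
  shows "(omega n * (\<gamma> * map_mat complex_of_real Y) * epsilon n) $$ (r,c)
     = (\<Sum>u<n. (\<gamma> $$ (r,u) + \<i> * \<gamma> $$ (r+2,u)) * complex_of_real (Y $$ (u,c)))"
proof -
  define X where "X = \<gamma> * map_mat complex_of_real Y"
  have X: "X \<in> carrier_mat n n" unfolding X_def using \<gamma> Y by auto
  have Xe: "X $$ (t,c) = (\<Sum>u<n. \<gamma> $$ (t,u) * complex_of_real (Y $$ (u,c)))" if "t < n" for t
    unfolding X_def using \<gamma> Y that c n by (simp add: scalar_prod_def lessThan_atLeast0)
  have om: "omega n \<in> carrier_mat 2 n" unfolding omega_def by simp
  have ep: "epsilon n \<in> carrier_mat n 2" unfolding epsilon_def by simp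
  have OX: "omega n * X \<in> carrier_mat 2 n" using om X by simp
  have "(omega n * X * epsilon n) $$ (r,c) = (\<Sum>t\<in>{0..<n}. (omega n * X) $$ (r,t) * (if t = c then 1 else 0))"
  proof -
    have d: "dim_row (omega n * X) = 2" "dim_col (omega n * X) = n" using OX by auto
    show ?thesis unfolding epsilon_def using d r c n
      by (subst index_mult_mat) (auto simp: scalar_prod_def intro!: sum.cong)
  qed
  also have "\<dots> = (omega n * X) $$ (r,c)"
    using c n by (simp add: if_distrib cong: if_cong) 
  also have "\<dots> = (\<Sum>t\<in>{0..<n}. (if t = r then 1 else if t = r + 2 then \<i> else 0) * X $$ (t,c))"
    using om X r c n unfolding omega_def by (simp add: scalar_prod_def)
  also have "\<dots> = (\<Sum>t\<in>{0..<n}. (if t = r then X $$ (r,c) else 0) + (if t = r + 2 then \<i> * X $$ (r+2,c) else 0))"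
    by (rule sum.cong) auto
  also have "\<dots> = X $$ (r,c) + \<i> * X $$ (r+2,c)"
    using r n by (simp add: sum.distrib)
  also have "\<dots> = (\<Sum>u<n. (\<gamma> $$ (r,u) + \<i> * \<gamma> $$ (r+2,u)) * complex_of_real (Y $$ (u,c)))"
    using r n by (simp add: Xe sum_distrib_left sum.distrib algebra_simps)
  finally show ?thesis unfolding X_def .
qed

lemma Mcol_eq:
  fixes \<gamma> :: "complex mat" and A B :: "real mat"
  assumes \<gamma>: "\<gamma> \<in> carrier_mat n n" and A: "A \<in> carrier_mat n n" and B: "B \<in> carrier_mat n n" and n: "n \<ge> 4"
    and r: "r < 2" and c: "c < 2" and e: "\<forall>u<n. A $$ (u,c) = B $$ (u,c)"
  shows "(omega n * (\<gamma> * map_mat complex_of_real B) * epsilon n) $$ (r,c)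
       = (omega n * (\<gamma> * map_mat complex_of_real A) * epsilon n) $$ (r,c)"
  unfolding M_entry[OF \<gamma> A n r c] M_entry[OF \<gamma> B n r c] using e by (intro sum.cong) auto

lemma Mcol_neg:
  fixes \<gamma> :: "complex mat" and A B :: "real mat"
  assumes \<gamma>: "\<gamma> \<in> carrier_mat n n" and A: "A \<in> carrier_mat n n" and B: "B \<in> carrier_mat n n" and n: "n \<ge> 4"
    and r: "r < 2" and c: "c < 2" and e: "\<forall>u<n. A $$ (u,c) = - B $$ (u,c)"
  shows "(omega n * (\<gamma> * map_mat complex_of_real B) * epsilon n) $$ (r,c)
       = (-1) * (omega n * (\<gamma> * map_mat complex_of_real A) * epsilon n) $$ (r,c)"
  unfolding M_entry[OF \<gamma> A n r c] M_entry[OF \<gamma> B n r c] using e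
  by (simp add: sum_negf[symmetric])



lemma orth_carrier: "A \<in> orth n \<Longrightarrow> A \<in> carrier_mat n n" by (simp add: orth_def)

lemma orth_mult:
  assumes A: "A \<in> orth n" and B: "B \<in> orth n"
  shows "A * B \<in> orth n"
proof -
  have Ac: "A \<in> carrier_mat n n" and AA: "transpose_mat A * A = 1\<^sub>m n" using A by (auto simp: orth_def)
  have Bc: "B \<in> carrier_mat n n" and BB: "transpose_mat B * B = 1\<^sub>m n" using B by (auto simp: orth_def)
  have "transpose_mat (A * B) * (A * B) = transpose_mat B * (transpose_mat A * A) * B"
    using Ac Bc by (simp add: transpose_mult assoc_mult_mat[of _ n n _ n _ n])
  also have "\<dots> = 1\<^sub>m n" using AA BB Bc by simp
  finally show ?thesis using Ac Bc by (simp add: orth_def)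
qed

lemma act_mult:
  assumes A: "A \<in> carrier_mat n n" and B: "B \<in> carrier_mat n n" and R: "R \<subseteq> carrier_vec n"
  shows "act (A * B) R = act A (act B R)"
  unfolding act_def using A B R by (auto simp: image_image intro!: image_cong)

lemma sphere_carrier: "J \<subseteq> sphere_n n \<Longrightarrow> J \<subseteq> carrier_vec n"
  unfolding sphere_n_def carrier_vec_def by auto

lemma act_props:
  assumes g: "g \<in> orth n" and J: "J \<in> I2 n \<theta>"
  shows "card (act g J) = card J" "ipJ (act g J) = ipJ J" "act g J \<in> I2 n \<theta>"
    "act g J = {} \<longleftrightarrow> J = {}"
proof -
  have Jsph: "J \<subseteq> sphere_n n" and Jfin: "finite J" and Jc: "card J \<le> 2"
    and Jind: "\<forall>x\<in>J. \<forall>y\<in>J. x \<noteq> y \<longrightarrow> \<not> (x \<bullet> y > cos \<theta>)" using J by (auto simp: I2_def)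
  have Jcar: "J \<subseteq> carrier_vec n" using sphere_carrier[OF Jsph] .
  have inj: "inj_on (\<lambda>x. g *\<^sub>v x) J" using orth_inj[OF g] Jcar by (auto simp: inj_on_def)
  have ip: "\<And>x y. x \<in> J \<Longrightarrow> y \<in> J \<Longrightarrow> (g *\<^sub>v x) \<bullet> (g *\<^sub>v y) = x \<bullet> y"
    using orth_ip[OF g] Jcar by auto
  have eqv: "\<And>x y. x \<in> J \<Longrightarrow> y \<in> J \<Longrightarrow> (g *\<^sub>v x = g *\<^sub>v y) = (x = y)"
    using inj by (auto simp: inj_on_def)
  show cd: "card (act g J) = card J" unfolding act_def by (rule card_image[OF inj])
  have "(\<exists>x\<in>act g J. \<exists>y\<in>act g J. (card (act g J) \<ge> 2 \<longrightarrow> x \<noteq> y) \<and> t = x \<bullet> y)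
      = (\<exists>x\<in>J. \<exists>y\<in>J. (card J \<ge> 2 \<longrightarrow> x \<noteq> y) \<and> t = x \<bullet> y)" for t
    unfolding cd unfolding act_def using ip eqv by auto
  then show "ipJ (act g J) = ipJ J" unfolding ipJ_def by simp
  have gc: "g \<in> carrier_mat n n" using g by (simp add: orth_def)
  have "act g J \<subseteq> sphere_n n"
  proof
    fix z assume "z \<in> act g J"
    then obtain x where x: "x \<in> J" "z = g *\<^sub>v x" unfolding act_def by auto
    have "x \<bullet> x = 1" "dim_vec x = n" using x Jsph by (auto simp: sphere_n_def)
    then show "z \<in> sphere_n n" using ip[OF x(1) x(1)] x gc by (auto simp: sphere_n_def)
  qed
  moreover have "finite (act g J)" using Jfin by (simp add: act_def)
  moreover have "\<forall>x\<in>act g J. \<forall>y\<in>act g J. x \<noteq> y \<longrightarrow> \<not> (x \<bullet> y > cos \<theta>)"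
    unfolding act_def using ip eqv Jind by auto
  ultimately show "act g J \<in> I2 n \<theta>" using cd Jc by (simp add: I2_def)
  show "act g J = {} \<longleftrightarrow> J = {}" by (simp add: act_def)
qed

lemma ipJ_single:
  assumes "x \<in> sphere_n n"
  shows "ipJ {x} = 1"
  using assms unfolding ipJ_def sphere_n_def by simp

theorem mainTheorem5:
  fixes n :: nat and \<theta> :: real and l1 l2 i j k :: nat
    and s :: "real vec set \<Rightarrow> real mat"
  assumes "n \<ge> 4"
    and "l2 \<le> l1"
    and "admissible (l1, l2) i j k"
    and "is_section n \<theta> s"
  shows "\<forall>g \<in> orth n. \<forall>J \<in> I2 n \<theta>. \<forall>\<gamma> \<in> orthC n.
           psi n s (l1, l2) i j k (act g J) \<gamma> = piR g (psi n s (l1, l2) i j k J) \<gamma>"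
proof (intro ballI)
  fix g J \<gamma> assume g: "g \<in> orth n" and J: "J \<in> I2 n \<theta>" and \<gamma>: "\<gamma> \<in> orthC n"
  note n = assms(1) and l = assms(2) and adm = assms(3) and sec = assms(4)
  have gc: "g \<in> carrier_mat n n" using g by (simp add: orth_def)
  have \<gamma>c: "\<gamma> \<in> carrier_mat n n" using \<gamma> by (simp add: orthC_def)
  note ap = act_props[OF g J]
  have gJ: "act g J \<in> I2 n \<theta>" by (rule ap(3))
  have xi_eq: "xi l1 l2 i j k (act g J) = xi l1 l2 i j k J"
    unfolding xi_def pJ_def q1_def q2_def ap(1) ap(2) ..
  have repr_eq: "repr n (act g J) = repr n J"
    unfolding repr_def q1_def q2_def ap(2) ap(4) ..
  define R where "R = repr n J"
  define c1 where "c1 = q1 J / 2"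
  define c2 where "c2 = q2 J / 2"
  define S where "S = s J"
  define B where "B = s (act g J)"
  define A where "A = g * S"
  have S: "S \<in> orth n" and SR: "act S R = J" using sec J unfolding is_section_def S_def R_def by auto
  have B: "B \<in> orth n" and BR: "act B R = act g J" using sec gJ repr_eq unfolding is_section_def B_def R_def by auto
  have A: "A \<in> orth n" unfolding A_def by (rule orth_mult[OF g S])
  have Sc: "S \<in> carrier_mat n n" and Bc: "B \<in> carrier_mat n n" and Ac: "A \<in> carrier_mat n n"
    using S B A by (auto simp: orth_def)
  have Rc: "R \<subseteq> carrier_vec n" unfolding R_def repr_def by auto
  have AR: "act A R = act B R" unfolding A_def act_mult[OF gc Sc Rc] SR BR ..
  have RJ: "J \<noteq> {} \<Longrightarrow> R = {vec n (\<lambda>i. if i = 0 then c1 else if i = 1 then c2 else 0),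
      vec n (\<lambda>i. if i = 0 then c1 else if i = 1 then - c2 else 0)}"
    unfolding R_def repr_def c1_def c2_def minus_divide_left by simp
  define M where "M = omega n * (\<gamma> * map_mat complex_of_real A) * epsilon n"
  define M' where "M' = omega n * (\<gamma> * map_mat complex_of_real B) * epsilon n"
  have Mc: "M \<in> carrier_mat 2 2" and M'c: "M' \<in> carrier_mat 2 2"
    unfolding M_def M'_def omega_def epsilon_def using \<gamma>c Ac Bc by auto
  have lhs: "psi n s (l1, l2) i j k (act g J) \<gamma> = complex_of_real (xi l1 l2 i j k J) \<cdot>\<^sub>v rho l1 l2 M' (wbasis l1 l2 k)"
    unfolding psi_def piR_def Psi_def M'_def B_def using xi_eq by simp
  have "\<gamma> * map_mat complex_of_real g * map_mat complex_of_real S = \<gamma> * map_mat complex_of_real A"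
    unfolding A_def map_mat_mult_real[OF gc Sc] using \<gamma>c gc Sc by (simp add: assoc_mult_mat[of _ n n _ n _ n])
  then have rhs: "piR g (psi n s (l1, l2) i j k J) \<gamma> = complex_of_real (xi l1 l2 i j k J) \<cdot>\<^sub>v rho l1 l2 M (wbasis l1 l2 k)"
    unfolding psi_def piR_def Psi_def M_def S_def by simp
  have key: "rho l1 l2 M' (wbasis l1 l2 k) = rho l1 l2 M (wbasis l1 l2 k)" if xnz: "xi l1 l2 i j k J \<noteq> 0"
  proof -
    have cr: "(c1 \<noteq> 0 \<longrightarrow> (\<forall>u<n. A $$ (u,0) = B $$ (u,0))) \<and>
         (c2 \<noteq> 0 \<longrightarrow> (\<forall>u<n. A $$ (u,1) = B $$ (u,1)) \<or> (\<forall>u<n. A $$ (u,1) = - B $$ (u,1)))"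
      if "J \<noteq> {}"
      by (rule cols_rel[OF A B _ AR[unfolded RJ[OF that]]]) (use n in simp)
    have col0: "\<And>r. r < 2 \<Longrightarrow> M' $$ (r,0) = M $$ (r,0)" if "J \<noteq> {}" "c1 \<noteq> 0"
      unfolding M_def M'_def using cr that by (intro Mcol_eq[OF \<gamma>c Ac Bc n]) auto
    have col1: "(\<forall>r<2. M' $$ (r,1) = 1 * M $$ (r,1)) \<or> (\<forall>r<2. M' $$ (r,1) = (-1) * M $$ (r,1))"
      if "J \<noteq> {}" "c2 \<noteq> 0"
    proof -
      from cr[OF that(1)] that(2) consider "\<forall>u<n. A $$ (u,1) = B $$ (u,1)" | "\<forall>u<n. A $$ (u,1) = - B $$ (u,1)"
        by blast
      then show ?thesis
      proof cases
        case 1 then show ?thesis unfolding M_def M'_def using Mcol_eq[OF \<gamma>c Ac Bc n] by simp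
      next
        case 2 then show ?thesis unfolding M_def M'_def using Mcol_neg[OF \<gamma>c Ac Bc n] by simp
      qed
    qed
    have Jfin: "finite J" and Jc2: "card J \<le> 2" and Jsph: "J \<subseteq> sphere_n n" using J by (auto simp: I2_def)
    consider "card J = 0" | "card J = 1" | "card J = 2" using Jc2 by linarith
    then show ?thesis
    proof cases
      case 1
      then have "i = 0" using xnz unfolding xi_def by (auto split: if_splits)
      then have "l1 = 0" "l2 = 0" using adm unfolding admissible_def by auto
      then show ?thesis by (simp add: rho_0)
    next
      case 2
      then have "i = 1" using xnz unfolding xi_def by (auto split: if_splits)
      then have l20: "l2 = 0" and k0: "k = 0" using adm unfolding admissible_def by auto
      obtain x where Jx: "J = {x}" using 2 by (auto simp: card_1_singleton_iff)
      have "ipJ J = 1" unfolding Jx by (rule ipJ_single) (use Jsph Jx in auto)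
      then have "c1 = 1" unfolding c1_def q1_def by simp
      then have "\<And>r. r < 2 \<Longrightarrow> M' $$ (r,0) = M $$ (r,0)" using col0 Jx by auto
      then show ?thesis unfolding l20 k0 by (rule rho_B)
    next
      case 3
      then have i2: "i = 2" using xnz unfolding xi_def by (auto split: if_splits)
      then have kl: "k \<le> l1 - l2" and ev: "even (l2 + k)" using adm unfolding admissible_def by auto
      have xnz': "pJ j J * q1 J ^ (l2 + (l1 - l2) - k) * q2 J ^ (l2 + k) \<noteq> 0"
        using xnz 3 i2 unfolding xi_def by simp
      then have p1: "q1 J ^ (l2 + (l1 - l2) - k) \<noteq> 0" and p2: "q2 J ^ (l2 + k) \<noteq> 0" by auto
      have Jne: "J \<noteq> {}" using 3 by auto
      have notboth: "\<not> (c1 = 0 \<and> c2 = 0)"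
        unfolding c1_def c2_def q1_def q2_def by auto
      consider "c1 \<noteq> 0" "c2 \<noteq> 0" | "c1 = 0" | "c2 = 0" by blast
      then show ?thesis
      proof cases
        case 1
        have s1: "(1::complex) * 1 = 1" and s2: "(-1::complex) * (-1) = 1" by simp_all
        from col1[OF Jne 1(2)] show ?thesis
        proof
          assume h: "\<forall>r<2. M' $$ (r,1) = 1 * M $$ (r,1)"
          show ?thesis by (rule rho_A[OF Mc M'c col0[OF Jne 1(1)] _ s1 ev kl]) (use h in auto)
        next
          assume h: "\<forall>r<2. M' $$ (r,1) = (-1) * M $$ (r,1)"
          show ?thesis by (rule rho_A[OF Mc M'c col0[OF Jne 1(1)] _ s2 ev kl]) (use h in auto)
        qed
      next
        case 2
        then have "q1 J = 0" unfolding c1_def by simp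
        then have "l2 + (l1 - l2) - k = 0" using p1 by (cases "l2 + (l1 - l2) - k") auto
        then have l20: "l2 = 0" and kl1: "k = l1" using kl l by auto
        have c2nz: "c2 \<noteq> 0" using notboth 2 by auto
        have s2: "(-1::complex) * (-1) = 1" by simp
        have evl: "even l1" using ev l20 kl1 by simp
        from col1[OF Jne c2nz] show ?thesis
        proof
          assume h: "\<forall>r<2. M' $$ (r,1) = 1 * M $$ (r,1)"
          show ?thesis unfolding l20 kl1 by (rule rho_C[where \<sigma>=1]) (use h evl in auto)
        next
          assume h: "\<forall>r<2. M' $$ (r,1) = (-1) * M $$ (r,1)"
          show ?thesis unfolding l20 kl1 by (rule rho_C[OF _ s2 evl]) (use h in auto)
        qed
      next
        case 3
        then have "q2 J = 0" unfolding c2_def by simp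
        then have "l2 + k = 0" using p2 by (cases "l2 + k") auto
        then have l20: "l2 = 0" and k0: "k = 0" by auto
        have c1nz: "c1 \<noteq> 0" using notboth 3 by auto
        show ?thesis unfolding l20 k0 by (rule rho_B[OF col0[OF Jne c1nz]])
      qed
    qed
  qed
  show "psi n s (l1, l2) i j k (act g J) \<gamma> = piR g (psi n s (l1, l2) i j k J) \<gamma>"
  proof (cases "xi l1 l2 i j k J = 0")
    case True
    then show ?thesis unfolding lhs rhs unfolding rho_def by (intro eq_vecI) auto
  next
    case False
    then show ?thesis unfolding lhs rhs using key[OF False] by simp
  qed
qed


end
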